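(* Let $T$ be a tree on $N>2$ vertices with $M\ge 2$ leaves. Then $$R^+(T)\ge N(N-4)+2(N-1)\left[M+\frac{(N-M)^2}{2(N-1)-M}\right].$$
   Context: For vertices $i,j$ of a connected graph $G$, $R_{ij}$ denotes the effective resistance between $i$ and $j$ when every edge is a unit resistor. The additive degree-Kirchhoff index is $R^+(G)=\sum_{i<j}(d_i+d_j)R_{ij}$, where $d_i$ is the degree of vertex $i$. *)

theory Defs
  imports Complex_Main
begin

definition simple_graph :: "'a set \<Rightarrow> ('a \<Rightarrow> 'a \<Rightarrow> bool) \<Rightarrow> bool" where
  "simple_graph V E \<longleftrightarrow> finite V \<and> (\<forall>u v. E u v \<longrightarrow> u \<in> V \<and> v \<in> V)
     \<and> (\<forall>u v. E u v \<longrightarrow> E v u) \<and> (\<forall>v. \<not> E v v)"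

definition connected_graph :: "'a set \<Rightarrow> ('a \<Rightarrow> 'a \<Rightarrow> bool) \<Rightarrow> bool" where
  "connected_graph V E \<longleftrightarrow> V \<noteq> {} \<and> (\<forall>u\<in>V. \<forall>v\<in>V. E\<^sup>*\<^sup>* u v)"

definition is_cycle :: "('a \<Rightarrow> 'a \<Rightarrow> bool) \<Rightarrow> 'a list \<Rightarrow> bool" where
  "is_cycle E c \<longleftrightarrow> length c \<ge> 3 \<and> distinct c
     \<and> (\<forall>k. Suc k < length c \<longrightarrow> E (c ! k) (c ! Suc k)) \<and> E (last c) (hd c)"

definition is_tree :: "'a set \<Rightarrow> ('a \<Rightarrow> 'a \<Rightarrow> bool) \<Rightarrow> bool" where
  "is_tree V E \<longleftrightarrow> simple_graph V E \<and> connected_graph V E \<and> (\<nexists>c. is_cycle E c)"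

definition degree :: "'a set \<Rightarrow> ('a \<Rightarrow> 'a \<Rightarrow> bool) \<Rightarrow> 'a \<Rightarrow> nat" where
  "degree V E v = card {u\<in>V. E v u}"

definition leaves :: "'a set \<Rightarrow> ('a \<Rightarrow> 'a \<Rightarrow> bool) \<Rightarrow> 'a set" where
  "leaves V E = {v\<in>V. degree V E v = 1}"

text \<open>Effective resistance with unit resistors: inject unit current at i, extract at j;
  by Kirchhoff's laws the node potentials v satisfy (L v)_k = [k=i] - [k=j], and
  R_ij is the potential difference v i - v j (well defined for connected graphs).\<close>
definition eff_res :: "'a set \<Rightarrow> ('a \<Rightarrow> 'a \<Rightarrow> bool) \<Rightarrow> 'a \<Rightarrow> 'a \<Rightarrow> real" where
  "eff_res V E i j = (THE r. \<exists>pot :: 'a \<Rightarrow> real.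
     (\<forall>k\<in>V. (\<Sum>l\<in>{l\<in>V. E k l}. pot k - pot l)
              = (if k = i then 1 else 0) - (if k = j then 1 else 0))
     \<and> r = pot i - pot j)"

definition add_deg_kirchhoff :: "'a::linorder set \<Rightarrow> ('a \<Rightarrow> 'a \<Rightarrow> bool) \<Rightarrow> real" where
  "add_deg_kirchhoff V E =
     (\<Sum>(i, j)\<in>{(i, j). i \<in> V \<and> j \<in> V \<and> i < j}.
        (real (degree V E i) + real (degree V E j)) * eff_res V E i j)"

end

theory Submission
  imports Defs "HOL-Library.Transitive_Closure_Table"
begin


definition rem :: "('a \<Rightarrow> 'a \<Rightarrow> bool) \<Rightarrow> 'a \<Rightarrow> 'a \<Rightarrow> 'a \<Rightarrow> 'a \<Rightarrow> bool" where
  "rem E a b x y \<longleftrightarrow> E x y \<and> \<not> ((x = a \<and> y = b) \<or> (x = b \<and> y = a))"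

definition side :: "('a \<Rightarrow> 'a \<Rightarrow> bool) \<Rightarrow> 'a \<Rightarrow> 'a \<Rightarrow> 'a \<Rightarrow> bool" where
  "side E a b x \<longleftrightarrow> (rem E a b)\<^sup>*\<^sup>* a x"

lemma rem_comm: "rem E a b = rem E b a" unfolding rem_def by (intro ext) auto

lemma rtrancl_path_adj:
  "rtrancl_path r x xs y \<Longrightarrow> Suc k < length (x # xs) \<Longrightarrow> r ((x # xs) ! k) ((x # xs) ! Suc k)"
proof (induction arbitrary: k rule: rtrancl_path.induct)
  case (base x) then show ?case by simp
next
  case (step x y ys z)
  show ?case
  proof (cases k)
    case 0 then show ?thesis using step by simp
  next
    case (Suc k') then show ?thesis using step.IH[of k'] step.prems by simp
  qed
qed

lemma rtrancl_path_last: "rtrancl_path r x xs y \<Longrightarrow> xs \<noteq> [] \<Longrightarrow> last xs = y"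
proof (induction rule: rtrancl_path.induct)
  case (base x) then show ?case by simp
next
  case (step x y ys z)
  then show ?case by (cases ys) (auto elim: rtrancl_path.cases)
qed

locale tree =
  fixes V :: "'a set" and E :: "'a \<Rightarrow> 'a \<Rightarrow> bool"
  assumes T: "is_tree V E"
begin

lemma finV: "finite V" using T unfolding is_tree_def simple_graph_def by blast
lemma EV: "E x y \<Longrightarrow> x \<in> V \<and> y \<in> V" using T unfolding is_tree_def simple_graph_def by blast
lemma Esym: "E x y \<Longrightarrow> E y x" using T unfolding is_tree_def simple_graph_def by blast
lemma Eirr: "\<not> E x x" using T unfolding is_tree_def simple_graph_def by blast
lemma conn: "u \<in> V \<Longrightarrow> v \<in> V \<Longrightarrow> E\<^sup>*\<^sup>* u v" using T unfolding is_tree_def connected_graph_def by blast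
lemma Vne: "V \<noteq> {}" using T unfolding is_tree_def connected_graph_def by blast
lemma nocyc: "\<not> is_cycle E c" using T unfolding is_tree_def by blast

lemma rem_sym: "rem E a b x y \<Longrightarrow> rem E a b y x" unfolding rem_def using Esym by blast

lemma remstar_sym: "(rem E a b)\<^sup>*\<^sup>* x y \<Longrightarrow> (rem E a b)\<^sup>*\<^sup>* y x"
proof (induction rule: rtranclp_induct)
  case base then show ?case by simp
next
  case (step y z)
  then show ?case using rem_sym by (meson converse_rtranclp_into_rtranclp)
qed

lemma bridge: assumes "E a b" shows "\<not> (rem E a b)\<^sup>*\<^sup>* a b"
proof
  assume "(rem E a b)\<^sup>*\<^sup>* a b"
  then obtain xs where "rtrancl_path (rem E a b) a xs b" by (auto simp: rtranclp_eq_rtrancl_path)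
  then obtain ys where p: "rtrancl_path (rem E a b) a ys b" and d: "distinct (a # ys)"
    by (rule rtrancl_path_distinct)
  have ab: "a \<noteq> b" using assms Eirr by auto
  have ne: "ys \<noteq> []" using p ab by (auto elim: rtrancl_path.cases)
  have lst: "last ys = b" using rtrancl_path_last[OF p ne] .
  have "length ys \<noteq> 1"
  proof
    assume "length ys = 1"
    then obtain y where "ys = [y]" by (cases ys) auto
    with lst have "ys = [b]" by simp
    with p have "rem E a b a b" by (auto elim: rtrancl_path.cases)
    then show False by (simp add: rem_def)
  qed
  then have "2 \<le> length ys" using ne by (cases ys; cases "tl ys") auto
  then have len: "length (a # ys) \<ge> 3" by simp
  have adj: "\<forall>k. Suc k < length (a # ys) \<longrightarrow> E ((a # ys) ! k) ((a # ys) ! Suc k)"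
    using rtrancl_path_adj[OF p] unfolding rem_def by blast
  have "E (last (a # ys)) (hd (a # ys))" using lst ne assms Esym by simp
  then have "is_cycle E (a # ys)" unfolding is_cycle_def using len d adj by blast
  then show False using nocyc by blast
qed

lemma part: assumes "E a b" "x \<in> V" shows "side E a b x \<or> side E b a x"
proof -
  have "a \<in> V" using EV assms by blast
  then have "E\<^sup>*\<^sup>* a x" using conn assms by blast
  then show ?thesis
  proof (induction rule: rtranclp_induct)
    case base then show ?case by (simp add: side_def)
  next
    case (step y z)
    show ?case
    proof (cases "(y = a \<and> z = b) \<or> (y = b \<and> z = a)")
      case True
      then show ?thesis by (auto simp: side_def)
    next
      case False
      then have r: "rem E a b y z" using step(2) unfolding rem_def by blast
      from step.IH show ?thesis
      proof
        assume "side E a b y" then show ?thesis using r unfolding side_def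
          by (meson rtranclp.rtrancl_into_rtrancl)
      next
        assume "side E b a y" then show ?thesis using r unfolding side_def rem_comm[of E a b]
          by (meson rtranclp.rtrancl_into_rtrancl)
      qed
    qed
  qed
qed

lemma disj: assumes "E a b" "side E a b x" "side E b a x" shows False
proof -
  have "(rem E a b)\<^sup>*\<^sup>* b x" using assms(3) unfolding side_def rem_comm[of E b a] .
  then have "(rem E a b)\<^sup>*\<^sup>* x b" by (rule remstar_sym)
  then have "(rem E a b)\<^sup>*\<^sup>* a b" using assms(2) unfolding side_def by (meson rtranclp_trans)
  then show False using bridge assms(1) by blast
qed

lemma side_iff: assumes "E a b" "x \<in> V" shows "side E a b x \<longleftrightarrow> \<not> side E b a x"
  using part[OF assms] disj[OF assms(1)] by blast

lemma side_self: "side E a b a" by (simp add: side_def)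

lemma side_other: assumes "E a b" shows "\<not> side E a b b"
  using bridge[OF assms] by (simp add: side_def)

lemma toward: assumes "i \<in> V" "x \<in> V" "i \<noteq> x" shows "\<exists>l. E i l \<and> side E l i x"
proof -
  have "E\<^sup>*\<^sup>* i x" using conn assms by blast
  then show ?thesis using assms(3)
  proof (induction rule: rtranclp_induct)
    case base then show ?case by simp
  next
    case (step y z)
    show ?case
    proof (cases "y = i")
      case True
      then show ?thesis using step(2) side_self by blast
    next
      case False
      then obtain l where l: "E i l" "side E l i y" using step.IH by blast
      have "rem E l i y z" using step(2) False step.prems unfolding rem_def by auto
      then have "side E l i z" using l(2) unfolding side_def by (meson rtranclp.rtrancl_into_rtrancl)
      then show ?thesis using l(1) by blast
    qed
  qed
qed

lemma toward_unique: assumes "E k l" "E k l'" "side E l k x" "side E l' k x" shows "l = l'"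
proof (rule ccontr)
  assume ne: "l \<noteq> l'"
  have xl: "(rem E l k)\<^sup>*\<^sup>* x l" using assms(3) unfolding side_def by (rule remstar_sym)
  have key: "(rem E l' k)\<^sup>*\<^sup>* x y \<or> (rem E l k)\<^sup>*\<^sup>* x k" if "(rem E l k)\<^sup>*\<^sup>* x y" for y
    using that
  proof (induction rule: rtranclp_induct)
    case base show ?case by simp
  next
    case (step y z)
    show ?case
    proof (cases "(y = l' \<and> z = k) \<or> (y = k \<and> z = l')")
      case True
      have "(rem E l k)\<^sup>*\<^sup>* x z" using step(1,2) by (rule rtranclp.rtrancl_into_rtrancl)
      then show ?thesis using True step(1) by auto
    next
      case False
      then have "rem E l' k y z" using step(2) unfolding rem_def by auto
      then show ?thesis using step(3) by (meson rtranclp.rtrancl_into_rtrancl)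
    qed
  qed
  from key[OF xl] show False
  proof
    assume h: "(rem E l' k)\<^sup>*\<^sup>* x l"
    have "rem E l' k l k" using assms(1) Esym ne Eirr unfolding rem_def by auto
    then have "(rem E l' k)\<^sup>*\<^sup>* l' k" using assms(4) h unfolding side_def
      by (meson rtranclp_trans rtranclp.rtrancl_into_rtrancl)
    then show False using bridge[of l' k] assms(2) Esym by blast
  next
    assume h: "(rem E l k)\<^sup>*\<^sup>* x k"
    then have "(rem E l k)\<^sup>*\<^sup>* l k" using assms(3) unfolding side_def by (meson rtranclp_trans)
    then show False using bridge[of l k] assms(1) Esym by blast
  qed
qed

lemma count_toward: assumes "k \<in> V" "x \<in> V"
  shows "card {l \<in> V. E k l \<and> side E l k x} = (if x = k then 0 else 1)"
proof (cases "x = k")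
  case True
  have e: "\<And>l. E k l \<Longrightarrow> \<not> side E l k k" using side_other Esym by blast
  have "{l \<in> V. E k l \<and> side E l k x} = {}" using True e by blast
  then have "card {l \<in> V. E k l \<and> side E l k x} = 0" by (simp only: card.empty)
  with True show ?thesis by simp
next
  case False
  obtain l where l: "E k l" "side E l k x" using toward[OF assms(1,2)] False by metis
  have "{l \<in> V. E k l \<and> side E l k x} = {l}" using l EV toward_unique by blast
  then show ?thesis using False by simp
qed

end


context tree begin

definition "OE = {(a,b). E a b}"

lemma finOE: "finite OE"
proof -
  have "OE \<subseteq> V \<times> V" unfolding OE_def using EV by auto
  then show ?thesis using finV finite_subset by blast
qed

definition w :: "'a \<Rightarrow> 'a \<Rightarrow> 'a \<times> 'a \<Rightarrow> real" where
  "w i j e = of_bool (side E (fst e) (snd e) i \<and> side E (snd e) (fst e) j)"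

definition pot :: "'a \<Rightarrow> 'a \<Rightarrow> 'a \<Rightarrow> real" where
  "pot i j x = (\<Sum>e\<in>OE. w i j e * of_bool (side E (fst e) (snd e) x))"

lemma pot_diff: assumes "E k l" shows "pot i j k - pot i j l = w i j (k,l) - w i j (l,k)"
proof -
  let ?g = "\<lambda>e. w i j e * (of_bool (side E (fst e) (snd e) k) - of_bool (side E (fst e) (snd e) l))"
  have kl: "k \<noteq> l" using assms Eirr by blast
  have "pot i j k - pot i j l = (\<Sum>e\<in>OE. ?g e)"
    unfolding pot_def by (simp add: sum_subtractf[symmetric] right_diff_distrib)
  also have "\<dots> = (\<Sum>e\<in>{(k,l),(l,k)}. ?g e)"
  proof (rule sum.mono_neutral_right)
    show "finite OE" by (rule finOE)
    show "{(k, l), (l, k)} \<subseteq> OE" unfolding OE_def using assms Esym[OF assms] by auto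
    show "\<forall>e\<in>OE - {(k, l), (l, k)}. ?g e = 0"
    proof
      fix e assume e: "e \<in> OE - {(k, l), (l, k)}"
      obtain a b where ab: "e = (a,b)" by (cases e)
      have r: "rem E a b k l" using e ab assms unfolding rem_def by auto
      have "side E a b k \<longleftrightarrow> side E a b l"
        using r rem_sym[OF r] unfolding side_def by (meson rtranclp.rtrancl_into_rtrancl)
      then show "?g e = 0" using ab by simp
    qed
  qed
  also have "\<dots> = ?g (k,l) + ?g (l,k)" using kl by simp
  also have "\<dots> = w i j (k,l) - w i j (l,k)"
    using side_self side_other[OF assms] side_other[OF Esym[OF assms]] by simp
  finally show ?thesis .
qed

lemma w_diff: assumes "E k l" "i \<in> V" "j \<in> V"
  shows "w i j (k,l) - w i j (l,k) = of_bool (side E l k j) - of_bool (side E l k i)"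
  using side_iff[OF assms(1) assms(2)] side_iff[OF assms(1) assms(3)] unfolding w_def by auto

lemma lap: assumes "k \<in> V" "i \<in> V" "j \<in> V"
  shows "(\<Sum>l\<in>{l\<in>V. E k l}. pot i j k - pot i j l) = (if k = i then 1 else 0) - (if k = j then 1 else 0)"
proof -
  have fin: "finite {l\<in>V. E k l}" using finV by simp
  have "(\<Sum>l\<in>{l\<in>V. E k l}. pot i j k - pot i j l)
      = (\<Sum>l\<in>{l\<in>V. E k l}. of_bool (side E l k j) - of_bool (side E l k i))"
    using pot_diff w_diff assms by (intro sum.cong) auto
  also have "\<dots> = (\<Sum>l\<in>{l\<in>V. E k l}. of_bool (side E l k j)) - (\<Sum>l\<in>{l\<in>V. E k l}. of_bool (side E l k i))"
    by (simp add: sum_subtractf)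
  also have "\<dots> = real (card {l\<in>V. E k l \<and> side E l k j}) - real (card {l\<in>V. E k l \<and> side E l k i})"
    using fin by (simp add: Int_def conj_assoc)
  also have "\<dots> = (if k = i then 1 else 0) - (if k = j then 1 else 0)"
    using count_toward[OF assms(1)] assms by auto
  finally show ?thesis .
qed

lemma harmonic_const:
  assumes h: "\<forall>k\<in>V. (\<Sum>l\<in>{l\<in>V. E k l}. h k - h l) = (0::real)" and "x \<in> V" "y \<in> V"
  shows "h x = h y"
proof -
  define m where "m = Max (h ` V)"
  have fin: "finite (h ` V)" using finV by simp
  have le: "\<And>z. z \<in> V \<Longrightarrow> h z \<le> m" unfolding m_def using fin by (intro Max_ge) auto
  have "m \<in> h ` V" unfolding m_def using fin Vne by (intro Max_in) auto
  then obtain k0 where k0: "k0 \<in> V" "h k0 = m" by auto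
  have all: "h z = m" if "z \<in> V" for z
  proof -
    have "E\<^sup>*\<^sup>* k0 z" using conn k0 that by blast
    then show ?thesis
    proof (induction rule: rtranclp_induct)
      case base then show ?case using k0 by simp
    next
      case (step y z)
      have yV: "y \<in> V" "z \<in> V" using EV step(2) by auto
      have fin2: "finite {l\<in>V. E y l}" using finV by simp
      have nn: "\<forall>l\<in>{l\<in>V. E y l}. 0 \<le> h y - h l"
      proof
        fix l assume "l \<in> {l\<in>V. E y l}"
        then have "h l \<le> m" using le by blast
        then show "0 \<le> h y - h l" using step.IH by simp
      qed
      have "(\<Sum>l\<in>{l\<in>V. E y l}. h y - h l) = 0" using h yV(1) by blast
      then have "\<forall>l\<in>{l\<in>V. E y l}. h y - h l = 0" using sum_nonneg_eq_0_iff[OF fin2, of "\<lambda>l. h y - h l"] nn by blast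
      moreover have "z \<in> {l\<in>V. E y l}" using yV step(2) by simp
      ultimately have "h y - h z = 0" by blast
      then show ?case using step.IH by simp
    qed
  qed
  show ?thesis using all assms by simp
qed

lemma eff_res_eq:
  fixes p :: "'a \<Rightarrow> real"
  assumes "i \<in> V" "j \<in> V"
    and p: "\<forall>k\<in>V. (\<Sum>l\<in>{l\<in>V. E k l}. p k - p l) = (if k = i then 1 else 0) - (if k = j then 1 else 0)"
  shows "eff_res V E i j = p i - p j"
  unfolding eff_res_def
proof (rule the_equality)
  show "\<exists>pot. (\<forall>k\<in>V. (\<Sum>l\<in>{l \<in> V. E k l}. pot k - pot l) = (if k = i then 1 else 0) - (if k = j then 1 else 0)) \<and>
      p i - p j = pot i - pot j" using p by blast
next
  fix r :: real assume "\<exists>pot. (\<forall>k\<in>V. (\<Sum>l\<in>{l \<in> V. E k l}. pot k - pot l) = (if k = i then 1 else 0) - (if k = j then 1 else 0)) \<and>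
      r = pot i - pot j"
  then obtain q :: "'a \<Rightarrow> real" where q: "\<forall>k\<in>V. (\<Sum>l\<in>{l \<in> V. E k l}. q k - q l) = (if k = i then 1 else 0) - (if k = j then 1 else 0)"
    and r: "r = q i - q j" by blast
  have "\<forall>k\<in>V. (\<Sum>l\<in>{l\<in>V. E k l}. (p k - q k) - (p l - q l)) = 0"
  proof
    fix k assume k: "k \<in> V"
    have "(\<Sum>l\<in>{l\<in>V. E k l}. (p k - q k) - (p l - q l)) = (\<Sum>l\<in>{l\<in>V. E k l}. (p k - p l) - (q k - q l))"
      by (simp add: algebra_simps)
    also have "\<dots> = (\<Sum>l\<in>{l\<in>V. E k l}. p k - p l) - (\<Sum>l\<in>{l\<in>V. E k l}. q k - q l)"
      by (simp add: sum_subtractf)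
    also have "\<dots> = 0" using p q k by simp
    finally show "(\<Sum>l\<in>{l\<in>V. E k l}. (p k - q k) - (p l - q l)) = 0" .
  qed
  from harmonic_const[OF this assms(1,2)] show "r = p i - p j" using r by simp
qed

lemma R_eq: assumes "i \<in> V" "j \<in> V" shows "eff_res V E i j = (\<Sum>e\<in>OE. w i j e)"
proof -
  have "eff_res V E i j = pot i j i - pot i j j"
    using eff_res_eq[OF assms] lap assms by blast
  moreover have "pot i j i = (\<Sum>e\<in>OE. w i j e)"
    unfolding pot_def by (intro sum.cong) (auto simp: w_def)
  moreover have "pot i j j = 0"
    unfolding pot_def
  proof (intro sum.neutral ballI)
    fix e assume "e \<in> OE"
    then have "E (fst e) (snd e)" unfolding OE_def by auto
    then show "w i j e * of_bool (side E (fst e) (snd e) j) = 0"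
      using disj unfolding w_def by auto
  qed
  ultimately show ?thesis by simp
qed

lemma R_ge1: assumes "i \<in> V" "j \<in> V" "i \<noteq> j" shows "eff_res V E i j \<ge> 1"
proof -
  obtain l where l: "E i l" "side E l i j" using toward assms by blast
  have "(\<Sum>e\<in>{(i,l)}. w i j e) \<le> (\<Sum>e\<in>OE. w i j e)"
    by (rule sum_mono2) (use finOE l in \<open>auto simp: OE_def w_def\<close>)
  then show ?thesis using R_eq[OF assms(1,2)] l side_self by (simp add: w_def)
qed

lemma R_ge2: assumes "i \<in> V" "j \<in> V" "i \<noteq> j" "\<not> E i j" shows "eff_res V E i j \<ge> 2"
proof -
  obtain l where l: "E i l" "side E l i j" using toward assms by blast
  obtain u where u: "E j u" "side E u j i" using toward assms by metis
  have ne: "(i,l) \<noteq> (u,j)" using assms(4) l by auto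
  have "(\<Sum>e\<in>{(i,l),(u,j)}. w i j e) \<le> (\<Sum>e\<in>OE. w i j e)"
    by (rule sum_mono2) (use finOE l u Esym[OF u(1)] in \<open>auto simp: OE_def w_def\<close>)
  then show ?thesis using R_eq[OF assms(1,2)] l u side_self ne by (simp add: w_def)
qed

end


context tree begin

lemma deg_sum: "(\<Sum>x\<in>V. degree V E x) = card OE"
proof -
  have "OE = Sigma V (\<lambda>a. {b\<in>V. E a b})" unfolding OE_def using EV by auto
  then show ?thesis unfolding degree_def using finV by simp
qed

lemma OE_ge: "card OE \<ge> 2 * (card V - 1)"
proof -
  obtain r where r: "r \<in> V" using Vne by blast
  define A where "A = V - {r}"
  define par where "par x = (SOME l. E x l \<and> side E l x r)" for x
  have par: "E x (par x) \<and> side E (par x) x r" if "x \<in> A" for x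
  proof -
    have "\<exists>l. E x l \<and> side E l x r" using toward[of x r] that r unfolding A_def by blast
    then show ?thesis unfolding par_def by (rule someI_ex)
  qed
  define up where "up x = (x, par x)" for x
  define dn where "dn x = (par x, x)" for x
  have i1: "inj_on up A" unfolding up_def by (auto intro: inj_onI)
  have i2: "inj_on dn A" unfolding dn_def by (auto intro: inj_onI)
  have dj: "up ` A \<inter> dn ` A = {}"
  proof (rule ccontr)
    assume "up ` A \<inter> dn ` A \<noteq> {}"
    then obtain e where e: "e \<in> up ` A" "e \<in> dn ` A" by blast
    from e(1) obtain x where x: "x \<in> A" "e = up x" by blast
    from e(2) obtain y where y: "y \<in> A" "e = dn y" by blast
    have xy: "x \<in> A" "y \<in> A" "up x = dn y" using x y by auto
    then have yx: "y = par x" "x = par y" unfolding up_def dn_def by auto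
    have "side E y x r" using par[OF xy(1)] yx(1) by simp
    moreover have "side E x y r" using par[OF xy(2)] yx(2) by simp
    moreover have "E x y" using par[OF xy(1)] yx(1) by simp
    ultimately show False using disj by blast
  qed
  have sub: "up ` A \<union> dn ` A \<subseteq> OE"
  proof
    fix e assume "e \<in> up ` A \<union> dn ` A"
    then obtain x where x: "x \<in> A" "e = up x \<or> e = dn x" by blast
    have "E x (par x)" using par[OF x(1)] by blast
    moreover then have "E (par x) x" by (rule Esym)
    ultimately show "e \<in> OE" using x(2) unfolding OE_def up_def dn_def by auto
  qed
  have finA: "finite A" unfolding A_def using finV by simp
  have "card (up ` A \<union> dn ` A) = card A + card A"
    using card_Un_disjoint[of "up ` A" "dn ` A"] finA dj card_image[OF i1] card_image[OF i2] by simp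
  also have "card A = card V - 1" unfolding A_def using r finV by simp
  finally have "card (up ` A \<union> dn ` A) = 2 * (card V - 1)" by simp
  moreover have "card (up ` A \<union> dn ` A) \<le> card OE" using card_mono[OF finOE sub] .
  ultimately show ?thesis by simp
qed

lemma edge_deg: assumes "E i j" shows "degree V E i + degree V E j \<le> card V"
proof -
  have dj: "{u\<in>V. E i u} \<inter> {u\<in>V. E j u} = {}"
  proof (rule ccontr)
    assume "{u\<in>V. E i u} \<inter> {u\<in>V. E j u} \<noteq> {}"
    then obtain u where u: "E i u" "E j u" by auto
    have ne: "i \<noteq> j" "j \<noteq> u" "i \<noteq> u" using assms u Eirr by auto
    have adj: "\<forall>k. Suc k < length [i,j,u] \<longrightarrow> E ([i,j,u] ! k) ([i,j,u] ! Suc k)"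
    proof (intro allI impI)
      fix k assume "Suc k < length [i,j,u]"
      then have "k = 0 \<or> k = 1" by auto
      then show "E ([i,j,u] ! k) ([i,j,u] ! Suc k)" using assms u by auto
    qed
    have "E (last [i,j,u]) (hd [i,j,u])" using Esym[OF u(1)] by simp
    then have "is_cycle E [i,j,u]" unfolding is_cycle_def using ne adj by auto
    then show False using nocyc by blast
  qed
  have "card ({u\<in>V. E i u} \<union> {u\<in>V. E j u}) = degree V E i + degree V E j"
    unfolding degree_def using card_Un_disjoint[OF _ _ dj] finV by simp
  moreover have "card ({u\<in>V. E i u} \<union> {u\<in>V. E j u}) \<le> card V" using finV by (intro card_mono) auto
  ultimately show ?thesis by simp
qed

end



lemma arith_final: fixes n m s :: real assumes "n \<ge> 3" "m \<ge> 2" "m \<le> n - 1" "s \<ge> 2*(n-1)"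
  shows "n*(n-4) + 2*(n-1)*(m + (n-m)^2/(2*(n-1)-m)) \<le> (3*n-4)*s/2"
proof -
  have D: "2*(n-1)-m > 0" using assms(1,3) by simp
  have e: "m + (n-m)^2/(2*(n-1)-m) = (n^2 - 2*m)/(2*(n-1)-m)"
    using D by (simp add: field_simps power2_eq_square)
  have key: "2*(n-1)*(n^2 - 2*m) \<le> (2*n^2 - 3*n + 4)*(2*(n-1)-m)"
  proof -
    have "(2*n^2 - 3*n + 4)*(2*(n-1)-m) - 2*(n-1)*(n^2 - 2*m) = n*(n-1) + (n-1-m)*(2*(n-2)^2+n)"
      by (simp add: algebra_simps power2_eq_square)
    moreover have "(n-1-m)*(2*(n-2)^2+n) \<ge> 0" using assms
      by (intro mult_nonneg_nonneg) auto
    moreover have "n*(n-1) \<ge> 0" using assms by simp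
    ultimately show ?thesis by linarith
  qed
  have "2*(n-1)*((n^2 - 2*m)/(2*(n-1)-m)) \<le> 2*n^2 - 3*n + 4"
    using key D by (simp add: pos_divide_le_eq)
  moreover have "(3*n-4)*(2*(n-1)) \<le> (3*n-4)*s" using assms by (intro mult_left_mono) auto
  moreover have "(3*n-4)*(2*(n-1)) = 2*(n*(n-4)) + 2*(2*n^2 - 3*n + 4)"
    by (simp add: algebra_simps power2_eq_square)
  ultimately show ?thesis unfolding e
  proof -
    have "\<And>A B C P K :: real. A \<le> K \<Longrightarrow> B \<le> C \<Longrightarrow> B = 2*P + 2*K \<Longrightarrow> P + A \<le> C/2" by linarith
    then show "2 * (n - 1) * ((n\<^sup>2 - 2 * m) / (2 * (n - 1) - m)) \<le> 2 * n\<^sup>2 - 3 * n + 4 \<Longrightarrow>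
    (3 * n - 4) * (2 * (n - 1)) \<le> (3 * n - 4) * s \<Longrightarrow>
    (3 * n - 4) * (2 * (n - 1)) = 2 * (n * (n - 4)) + 2 * (2 * n\<^sup>2 - 3 * n + 4) \<Longrightarrow>
    n * (n - 4) + 2 * (n - 1) * ((n\<^sup>2 - 2 * m) / (2 * (n - 1) - m)) \<le> (3 * n - 4) * s / 2"
      by (metis mult.assoc)
  qed
qed

theorem corollary1:
  fixes V :: "'a::linorder set" and E :: "'a \<Rightarrow> 'a \<Rightarrow> bool" and N M :: nat
  assumes "is_tree V E"
    and "N = card V" and "N > 2"
    and "M = card (leaves V E)" and "M \<ge> 2"
  shows "add_deg_kirchhoff V E \<ge>
    real N * (real N - 4) + 2 * (real N - 1) *
      (real M + (real N - real M)^2 / (2 * (real N - 1) - real M))"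
proof -
  interpret t: tree V E by (rule tree.intro) (rule assms(1))
  define d where "d x = real (degree V E x)" for x
  define S where "S = (\<Sum>x\<in>V. d x)"
  define P where "P = {(i, j). i \<in> V \<and> j \<in> V \<and> i < j}"
  define Q where "Q = {(i, j). i \<in> V \<and> j \<in> V \<and> j < i}"
  define Off where "Off = {(i, j). i \<in> V \<and> j \<in> V \<and> i \<noteq> j}"
  define h where "h = (\<lambda>(i,j). (d i + d j) * (2 - of_bool (E i j)))"
  define LB where "LB = (\<lambda>(i,j). 2 * (d i + d j) - real N * of_bool (E i j))"
  have finV: "finite V" by (rule t.finV)
  have finOff: "finite Off"
  proof -
    have "Off \<subseteq> V \<times> V" unfolding Off_def by auto
    then show ?thesis using finV finite_subset by blast
  qed
  have finP: "finite P" using finOff unfolding P_def Off_def by (rule rev_finite_subset) auto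
  have finQ: "finite Q" using finOff unfolding Q_def Off_def by (rule rev_finite_subset) auto
  have dnn: "\<And>x. d x \<ge> 0" unfolding d_def by simp
  have N1: "N \<ge> 1" using assms(3) by simp
  have S_eq: "S = real (card t.OE)"
    unfolding S_def d_def using t.deg_sum by (metis of_nat_sum)
  have S_ge: "S \<ge> 2 * (real N - 1)"
  proof -
    have "real (2 * (card V - 1)) \<le> real (card t.OE)" using t.OE_ge by (rule of_nat_mono)
    then show ?thesis using S_eq assms(2) N1 by (simp add: of_nat_diff)
  qed
  have step1: "(\<Sum>p\<in>P. h p) \<le> add_deg_kirchhoff V E"
    unfolding add_deg_kirchhoff_def P_def[symmetric]
  proof (rule sum_mono)
    fix p assume "p \<in> P"
    then obtain i j where p: "p = (i,j)" "i \<in> V" "j \<in> V" "i < j" unfolding P_def by auto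
    have ij: "i \<noteq> j" using p by simp
    have "(d i + d j) * (2 - of_bool (E i j)) \<le> (d i + d j) * eff_res V E i j"
    proof (cases "E i j")
      case True
      have "(d i + d j) * 1 \<le> (d i + d j) * eff_res V E i j"
        using t.R_ge1[OF p(2,3) ij] dnn[of i] dnn[of j] by (intro mult_left_mono) auto
      then show ?thesis using True by simp
    next
      case False
      have "(d i + d j) * 2 \<le> (d i + d j) * eff_res V E i j"
        using t.R_ge2[OF p(2,3) ij False] dnn[of i] dnn[of j] by (intro mult_left_mono) auto
      then show ?thesis using False by simp
    qed
    then show "h p \<le> (case p of (i, j) \<Rightarrow> (real (degree V E i) + real (degree V E j)) * eff_res V E i j)"
      unfolding h_def d_def p by simp
  qed
  have hsym: "h (j,i) = h (i,j)" for i j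
  proof -
    have "E j i = E i j" using t.Esym by blast
    then show ?thesis unfolding h_def by (simp add: add.commute)
  qed
  have Qim: "Q = (\<lambda>(i,j). (j,i)) ` P" unfolding P_def Q_def by auto
  have injs: "inj_on (\<lambda>(i,j). (j,i)) P" by (auto intro: inj_onI)
  have "(\<Sum>p\<in>Q. h p) = (\<Sum>p\<in>P. h ((\<lambda>(i,j). (j,i)) p))"
    unfolding Qim by (rule sum.reindex[OF injs, unfolded comp_def])
  also have "\<dots> = (\<Sum>p\<in>P. h p)" by (intro sum.cong) (auto simp: hsym)
  finally have QP: "(\<Sum>p\<in>Q. h p) = (\<Sum>p\<in>P. h p)" .
  have OffPQ: "Off = P \<union> Q" "P \<inter> Q = {}" unfolding Off_def P_def Q_def by auto
  have step2: "(\<Sum>p\<in>Off. h p) = 2 * (\<Sum>p\<in>P. h p)"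
    using sum.union_disjoint[OF finP finQ OffPQ(2), of h] OffPQ(1) QP by simp
  have step3: "(\<Sum>p\<in>Off. LB p) \<le> (\<Sum>p\<in>Off. h p)"
  proof (rule sum_mono)
    fix p assume "p \<in> Off"
    then obtain i j where p: "p = (i,j)" by (cases p)
    show "LB p \<le> h p"
    proof (cases "E i j")
      case True
      have "degree V E i + degree V E j \<le> card V" using t.edge_deg[OF True] .
      then have "d i + d j \<le> real N" unfolding d_def assms(2) by (metis of_nat_add of_nat_mono)
      then show ?thesis unfolding LB_def h_def p using True by simp
    next
      case False
      then show ?thesis unfolding LB_def h_def p by simp
    qed
  qed
  have inner: "(\<Sum>j\<in>V - {i}. LB (i,j)) = 2 * ((real N - 1) * d i) + 2 * (S - d i) - real N * d i"
    if iV: "i \<in> V" for i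
  proof -
    have c: "card (V - {i}) = N - 1" using iV finV assms(2) by simp
    have s1: "(\<Sum>j\<in>V - {i}. d i) = (real N - 1) * d i" using c N1 by (simp add: of_nat_diff)
    have s2: "(\<Sum>j\<in>V - {i}. d j) = S - d i" unfolding S_def using finV iV by (simp add: sum_diff1)
    have "(V - {i}) \<inter> {j. E i j} = {u \<in> V. E i u}" using t.Eirr by auto
    then have s3: "(\<Sum>j\<in>V - {i}. of_bool (E i j) :: real) = d i"
      unfolding d_def degree_def using finV by simp
    have "(\<Sum>j\<in>V - {i}. LB (i,j)) = (\<Sum>j\<in>V - {i}. 2 * d i + 2 * d j - real N * of_bool (E i j))"
      unfolding LB_def by (simp add: algebra_simps)
    also have "\<dots> = 2 * (\<Sum>j\<in>V - {i}. d i) + 2 * (\<Sum>j\<in>V - {i}. d j) - real N * (\<Sum>j\<in>V - {i}. of_bool (E i j))"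
      by (simp add: sum.distrib sum_subtractf sum_distrib_left)
    also have "\<dots> = 2 * ((real N - 1) * d i) + 2 * (S - d i) - real N * d i"
      using s1 s2 s3 by simp
    finally show ?thesis .
  qed
  have OffS: "Off = Sigma V (\<lambda>i. V - {i})" unfolding Off_def by auto
  have "(\<Sum>p\<in>Off. LB p) = (\<Sum>i\<in>V. \<Sum>j\<in>V - {i}. LB (i,j))"
    unfolding OffS using finV by (simp add: sum.Sigma)
  also have "\<dots> = (\<Sum>i\<in>V. (real N - 4) * d i + 2 * S)"
    using inner by (intro sum.cong) (auto simp: algebra_simps)
  also have "\<dots> = (real N - 4) * S + real N * (2 * S)"
    unfolding S_def by (simp add: sum.distrib sum_distrib_left assms(2))
  finally have step4: "(\<Sum>p\<in>Off. LB p) = (3 * real N - 4) * S" by (simp add: algebra_simps)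
  have main: "(3 * real N - 4) * S / 2 \<le> add_deg_kirchhoff V E"
    using step1 step2 step3 step4 by simp
  have lsub: "leaves V E \<subseteq> V" unfolding leaves_def by auto
  have MN: "M \<le> N" using card_mono[OF finV lsub] assms(2,4) by simp
  have "M \<noteq> N"
  proof
    assume "M = N"
    then have "leaves V E = V" using card_subset_eq[OF finV lsub] assms(2,4) by simp
    then have "\<forall>x\<in>V. d x = 1" unfolding leaves_def d_def by auto
    then have "S = real N" unfolding S_def using assms(2) by simp
    then show False using S_ge assms(3) by simp
  qed
  with MN have "M \<le> N - 1" by simp
  then have Mle: "real M \<le> real N - 1" using N1 by (simp add: of_nat_diff)
  have "real N * (real N - 4) + 2 * (real N - 1) *
      (real M + (real N - real M)^2 / (2 * (real N - 1) - real M)) \<le> (3 * real N - 4) * S / 2"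
    by (rule arith_final) (use assms(3,5) Mle S_ge in auto)
  then show ?thesis using main by linarith
qed


end
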